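(* There exists a constant $C>1$ such that for every $0<r<\tfrac13$, $$\frac1C\,\Lambda(B(S,r'),r')\Big(\frac43\Big)^{k_r}\le \Lambda(B(S,r),r)\le C\,\Lambda(B(S,r'),r')\Big(\frac43\Big)^{k_r},$$ where $k_r$ is the unique positive integer with $\tfrac13\le 3^{k_r}r<1$ and $r':=3^{k_r}r$.
   Context: Identify $\mathbb{R}^2$ with $\mathbb{C}$. $S$ denotes the von Koch curve: the unique nonempty compact set with $S=\bigcup_{i=1}^4 f_i(S)$, where $f_1(z)=z/3$, $f_2(z)=\tfrac13+e^{i\pi/3}z/3$, $f_3(z)=\tfrac12+\tfrac{\sqrt3}{6}i+e^{-i\pi/3}z/3$, $f_4(z)=\tfrac23+z/3$. For $A\subset\mathbb{R}^2$, $B(A,r):=\{x:\mathrm{dist}(x,A)\le r\}$. A rectifiable curve is the image of a Lipschitz map $[0,1]\to\mathbb{R}^2$. $\Lambda(E,r):=\inf\{\mathcal{H}^1(\Gamma):\Gamma \text{ a rectifiable curve with } B(\Gamma,r)\supset E\}$. *)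

theory Defs
  imports "HOL-Analysis.Analysis"
begin

definition koch_f1 :: "complex \<Rightarrow> complex" where
  "koch_f1 z = z / 3"
definition koch_f2 :: "complex \<Rightarrow> complex" where
  "koch_f2 z = 1/3 + cis (pi/3) * z / 3"
definition koch_f3 :: "complex \<Rightarrow> complex" where
  "koch_f3 z = 1/2 + complex_of_real (sqrt 3 / 6) * \<i> + cis (- pi/3) * z / 3"
definition koch_f4 :: "complex \<Rightarrow> complex" where
  "koch_f4 z = 2/3 + z / 3"

definition koch :: "complex set" where
  "koch = (THE K. K \<noteq> {} \<and> compact K \<and>
            K = koch_f1 ` K \<union> koch_f2 ` K \<union> koch_f3 ` K \<union> koch_f4 ` K)"

definition nbhd :: "complex set \<Rightarrow> real \<Rightarrow> complex set" where
  "nbhd A r = {x. infdist x A \<le> r}"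

definition hausdorff1_pre :: "real \<Rightarrow> complex set \<Rightarrow> ennreal" where
  "hausdorff1_pre \<delta> E = (INF U \<in> {U :: nat \<Rightarrow> complex set.
        E \<subseteq> (\<Union>i. U i) \<and> (\<forall>i. bounded (U i) \<and> diameter (U i) \<le> \<delta>)}.
        (\<Sum>i. ennreal (diameter (U i))))"

definition hausdorff1 :: "complex set \<Rightarrow> ennreal" where
  "hausdorff1 E = (SUP \<delta> \<in> {0<..}. hausdorff1_pre \<delta> E)"

definition rect_curve :: "complex set \<Rightarrow> bool" where
  "rect_curve \<Gamma> \<longleftrightarrow> (\<exists>\<gamma> :: real \<Rightarrow> complex. \<exists>L. L-lipschitz_on {0..1} \<gamma> \<and> \<Gamma> = \<gamma> ` {0..1})"

definition Lam :: "complex set \<Rightarrow> real \<Rightarrow> ennreal" where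
  "Lam E r = (INF \<Gamma> \<in> {\<Gamma>. rect_curve \<Gamma> \<and> E \<subseteq> nbhd \<Gamma> r}. hausdorff1 \<Gamma>)"

end

theory Submission
  imports Defs
begin


definition fk :: "nat \<Rightarrow> complex \<Rightarrow> complex" where
  "fk i = (if i = 0 then koch_f1 else if i = 1 then koch_f2 else if i = 2 then koch_f3 else koch_f4)"

lemma sq3: "sqrt 3 * sqrt 3 = (3::real)" by simp
lemma sq3_bounds: "1.7 < sqrt (3::real)" "sqrt (3::real) < 1.8"
  by (rule real_less_rsqrt, simp add: power2_eq_square) (rule real_less_lsqrt, simp_all add: power2_eq_square)

lemma cis60: "cis (pi/3) = Complex (1/2) (sqrt 3/2)" by (simp add: cis.ctr cos_60 sin_60)
lemma cism60: "cis (- pi/3) = Complex (1/2) (- sqrt 3/2)"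
  by (simp add: cis.ctr cos_60 sin_60 minus_divide_left[symmetric] del: minus_divide_left)

lemma f1_ReIm: "Re (koch_f1 z) = Re z / 3" "Im (koch_f1 z) = Im z / 3"
  by (simp_all add: koch_f1_def)
lemma f2_ReIm: "Re (koch_f2 z) = 1/3 + (Re z/2 - sqrt 3 * Im z/2)/3"
   "Im (koch_f2 z) = (sqrt 3 * Re z/2 + Im z/2)/3"
  by (simp_all add: koch_f2_def cis60 cos_60 sin_60 field_simps)
lemma f3_ReIm: "Re (koch_f3 z) = 1/2 + (Re z/2 + sqrt 3 * Im z/2)/3"
   "Im (koch_f3 z) = sqrt 3/6 + (- sqrt 3 * Re z/2 + Im z/2)/3"
  by (simp_all add: koch_f3_def cism60 cos_60 sin_60 field_simps)
lemma f4_ReIm: "Re (koch_f4 z) = 2/3 + Re z / 3" "Im (koch_f4 z) = Im z / 3"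
  by (simp_all add: koch_f4_def)

lemma fk_form: "i < 4 \<Longrightarrow> \<exists>a b. cmod b = 1 \<and> fk i = (\<lambda>z. a + b * z / 3)"
proof -
  assume "i < 4"
  then consider "i = 0" | "i = 1" | "i = 2" | "i = 3" by linarith
  then show ?thesis
  proof cases
    case 1 then show ?thesis by (intro exI[of _ 0] exI[of _ 1]) (auto simp: fk_def koch_f1_def)
  next
    case 2 then show ?thesis by (intro exI[of _ "1/3"] exI[of _ "cis (pi/3)"]) (auto simp: fk_def koch_f2_def)
  next
    case 3 then show ?thesis by (intro exI[of _ "1/2 + complex_of_real (sqrt 3 / 6) * \<i>"] exI[of _ "cis (-pi/3)"]) (auto simp: fk_def koch_f3_def)
  next
    case 4 then show ?thesis by (intro exI[of _ "2/3"] exI[of _ 1]) (auto simp: fk_def koch_f4_def)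
  qed
qed

lemma fk_dist: "i < 4 \<Longrightarrow> dist (fk i x) (fk i y) = dist x y / 3"
proof -
  assume "i < 4"
  then obtain a b where b: "cmod b = 1" and f: "fk i = (\<lambda>z. a + b * z / 3)" using fk_form by blast
  have "fk i x - fk i y = b * (x - y) / 3" by (simp add: f algebra_simps diff_divide_distrib)
  then have "dist (fk i x) (fk i y) = cmod (b*(x-y)/3)" by (simp only: dist_norm)
  also have "\<dots> = dist x y / 3" by (simp add: norm_mult norm_divide b dist_norm)
  finally show ?thesis .
qed

lemma fk_surj: "i < 4 \<Longrightarrow> \<exists>x'. fk i x' = x"
proof -
  assume "i < 4"
  then obtain a b where b: "cmod b = 1" and f: "fk i = (\<lambda>z. a + b * z / 3)" using fk_form by blast
  have "b \<noteq> 0" using b by auto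
  then show ?thesis by (intro exI[of _ "3 * (x - a) / b"]) (simp add: f field_simps)
qed

lemma fk_inj: "i < 4 \<Longrightarrow> fk i x = fk i y \<Longrightarrow> x = y"
  using fk_dist[of i x y] by simp

lemma fk_cont: "i < 4 \<Longrightarrow> continuous_on A (fk i)"
proof -
  assume "i < 4"
  then obtain a b where b: "cmod b = 1" and f: "fk i = (\<lambda>z. a + b * z / 3)" using fk_form by blast
  show ?thesis unfolding f by (auto intro!: continuous_intros)
qed



definition KT :: "complex set" where
  "KT = {z. 0 \<le> Im z \<and> sqrt 3 * Im z \<le> Re z \<and> sqrt 3 * Im z \<le> 1 - Re z}"
definition KO :: "complex set" where
  "KO = {z. 0 < Im z \<and> sqrt 3 * Im z < Re z \<and> sqrt 3 * Im z < 1 - Re z}"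

lemmas ReIm = f1_ReIm f2_ReIm f3_ReIm f4_ReIm

lemma s3x: "sqrt 3 * (sqrt 3 * x) = 3 * (x::real)" by (simp add: mult.assoc[symmetric])

lemma s3pos: "0 < sqrt (3::real)" by simp

lemma KT_facts: assumes "z \<in> KT" shows "0 \<le> Im z * sqrt 3 \<and> 0 \<le> Re z \<and> Re z \<le> 1 \<and> 0 \<le> Re z * sqrt 3 \<and> Re z * sqrt 3 \<le> sqrt 3 \<and> 0 \<le> Im z"
proof -
  have a: "0 \<le> Im z" "sqrt 3 * Im z \<le> Re z" "sqrt 3 * Im z \<le> 1 - Re z" using assms by (auto simp: KT_def)
  have b: "0 \<le> Im z * sqrt 3" using a(1) s3pos by simp
  have a': "Im z * sqrt 3 \<le> Re z" "Im z * sqrt 3 \<le> 1 - Re z" using a by (simp_all add: mult.commute)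
  then have c: "0 \<le> Re z" "Re z \<le> 1" using b by linarith+
  have "Re z * sqrt 3 \<le> 1 * sqrt 3" by (rule mult_right_mono[OF c(2)]) simp
  with b c a show ?thesis by simp
qed

lemma KO_facts: assumes "z \<in> KO" shows "0 < Im z * sqrt 3 \<and> 0 < Re z \<and> Re z < 1 \<and> 0 < Re z * sqrt 3 \<and> Re z * sqrt 3 < sqrt 3 \<and> 0 < Im z"
proof -
  have a: "0 < Im z" "sqrt 3 * Im z < Re z" "sqrt 3 * Im z < 1 - Re z" using assms by (auto simp: KO_def)
  have b: "0 < Im z * sqrt 3" using a(1) s3pos by simp
  have a': "Im z * sqrt 3 < Re z" "Im z * sqrt 3 < 1 - Re z" using a by (simp_all add: mult.commute)
  then have c: "0 < Re z" "Re z < 1" using b by linarith+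
  have "Re z * sqrt 3 < 1 * sqrt 3" by (rule mult_strict_right_mono[OF c(2)]) simp
  with b c a show ?thesis by simp
qed


lemma KT_I: "0 \<le> Im z \<Longrightarrow> Im z * sqrt 3 \<le> Re z \<Longrightarrow> Im z * sqrt 3 \<le> 1 - Re z \<Longrightarrow> z \<in> KT"
  by (simp add: KT_def mult.commute)
lemma KO_I: "0 < Im z \<Longrightarrow> Im z * sqrt 3 < Re z \<Longrightarrow> Im z * sqrt 3 < 1 - Re z \<Longrightarrow> z \<in> KO"
  by (simp add: KO_def mult.commute)
lemma KT_D: "z \<in> KT \<Longrightarrow> Im z * sqrt 3 \<le> Re z \<and> Im z * sqrt 3 \<le> 1 - Re z"
  by (simp add: KT_def mult.commute)
lemma KO_D: "z \<in> KO \<Longrightarrow> Im z * sqrt 3 < Re z \<and> Im z * sqrt 3 < 1 - Re z"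
  by (simp add: KO_def mult.commute)

lemma f1_H: assumes "z \<in> KT" shows "koch_f1 z \<in> KT"
proof (rule KT_I)
  note h = KT_facts[OF assms] KT_D[OF assms]
  show "0 \<le> Im (koch_f1 z)" apply (simp add: ReIm algebra_simps) using h by (elim conjE; simp add: field_simps; argo)
  show "Im (koch_f1 z) * sqrt 3 \<le> Re (koch_f1 z)" apply (simp add: ReIm algebra_simps) using h by (elim conjE; simp add: field_simps; argo)
  show "Im (koch_f1 z) * sqrt 3 \<le> 1 - Re (koch_f1 z)" apply (simp add: ReIm algebra_simps) using h by (elim conjE; simp add: field_simps; argo)
qed

lemma f1_O: assumes "z \<in> KO" shows "koch_f1 z \<in> KO"
proof (rule KO_I)
  note h = KO_facts[OF assms] KO_D[OF assms]
  show "0 < Im (koch_f1 z)" apply (simp add: ReIm algebra_simps) using h by (elim conjE; simp add: field_simps; argo)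
  show "Im (koch_f1 z) * sqrt 3 < Re (koch_f1 z)" apply (simp add: ReIm algebra_simps) using h by (elim conjE; simp add: field_simps; argo)
  show "Im (koch_f1 z) * sqrt 3 < 1 - Re (koch_f1 z)" apply (simp add: ReIm algebra_simps) using h by (elim conjE; simp add: field_simps; argo)
qed

lemma f2_H: assumes "z \<in> KT" shows "koch_f2 z \<in> KT"
proof (rule KT_I)
  note h = KT_facts[OF assms] KT_D[OF assms]
  show "0 \<le> Im (koch_f2 z)" apply (simp add: ReIm algebra_simps) using h by (elim conjE; simp add: field_simps; argo)
  show "Im (koch_f2 z) * sqrt 3 \<le> Re (koch_f2 z)" apply (simp add: ReIm algebra_simps) using h by (elim conjE; simp add: field_simps; argo)
  show "Im (koch_f2 z) * sqrt 3 \<le> 1 - Re (koch_f2 z)" apply (simp add: ReIm algebra_simps) using h by (elim conjE; simp add: field_simps; argo)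
qed

lemma f2_O: assumes "z \<in> KO" shows "koch_f2 z \<in> KO"
proof (rule KO_I)
  note h = KO_facts[OF assms] KO_D[OF assms]
  show "0 < Im (koch_f2 z)" apply (simp add: ReIm algebra_simps) using h by (elim conjE; simp add: field_simps; argo)
  show "Im (koch_f2 z) * sqrt 3 < Re (koch_f2 z)" apply (simp add: ReIm algebra_simps) using h by (elim conjE; simp add: field_simps; argo)
  show "Im (koch_f2 z) * sqrt 3 < 1 - Re (koch_f2 z)" apply (simp add: ReIm algebra_simps) using h by (elim conjE; simp add: field_simps; argo)
qed

lemma f3_H: assumes "z \<in> KT" shows "koch_f3 z \<in> KT"
proof (rule KT_I)
  note h = KT_facts[OF assms] KT_D[OF assms]
  show "0 \<le> Im (koch_f3 z)" apply (simp add: ReIm algebra_simps) using h by (elim conjE; simp add: field_simps; argo)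
  show "Im (koch_f3 z) * sqrt 3 \<le> Re (koch_f3 z)" apply (simp add: ReIm algebra_simps) using h by (elim conjE; simp add: field_simps; argo)
  show "Im (koch_f3 z) * sqrt 3 \<le> 1 - Re (koch_f3 z)" apply (simp add: ReIm algebra_simps) using h by (elim conjE; simp add: field_simps; argo)
qed

lemma f3_O: assumes "z \<in> KO" shows "koch_f3 z \<in> KO"
proof (rule KO_I)
  note h = KO_facts[OF assms] KO_D[OF assms]
  show "0 < Im (koch_f3 z)" apply (simp add: ReIm algebra_simps) using h by (elim conjE; simp add: field_simps; argo)
  show "Im (koch_f3 z) * sqrt 3 < Re (koch_f3 z)" apply (simp add: ReIm algebra_simps) using h by (elim conjE; simp add: field_simps; argo)
  show "Im (koch_f3 z) * sqrt 3 < 1 - Re (koch_f3 z)" apply (simp add: ReIm algebra_simps) using h by (elim conjE; simp add: field_simps; argo)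
qed

lemma f4_H: assumes "z \<in> KT" shows "koch_f4 z \<in> KT"
proof (rule KT_I)
  note h = KT_facts[OF assms] KT_D[OF assms]
  show "0 \<le> Im (koch_f4 z)" apply (simp add: ReIm algebra_simps) using h by (elim conjE; simp add: field_simps; argo)
  show "Im (koch_f4 z) * sqrt 3 \<le> Re (koch_f4 z)" apply (simp add: ReIm algebra_simps) using h by (elim conjE; simp add: field_simps; argo)
  show "Im (koch_f4 z) * sqrt 3 \<le> 1 - Re (koch_f4 z)" apply (simp add: ReIm algebra_simps) using h by (elim conjE; simp add: field_simps; argo)
qed

lemma f4_O: assumes "z \<in> KO" shows "koch_f4 z \<in> KO"
proof (rule KO_I)
  note h = KO_facts[OF assms] KO_D[OF assms]
  show "0 < Im (koch_f4 z)" apply (simp add: ReIm algebra_simps) using h by (elim conjE; simp add: field_simps; argo)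
  show "Im (koch_f4 z) * sqrt 3 < Re (koch_f4 z)" apply (simp add: ReIm algebra_simps) using h by (elim conjE; simp add: field_simps; argo)
  show "Im (koch_f4 z) * sqrt 3 < 1 - Re (koch_f4 z)" apply (simp add: ReIm algebra_simps) using h by (elim conjE; simp add: field_simps; argo)
qed


lemma f1_sep: "z \<in> KO \<Longrightarrow> Re (koch_f1 z) < 1/3 \<and> Im (koch_f1 z) * sqrt 3 + Re (koch_f1 z) < 1/3"
  using KO_facts[of z] KO_D[of z] by (simp add: ReIm algebra_simps; elim conjE; simp add: field_simps; argo)
lemma f2_sep: "z \<in> KO \<Longrightarrow> Re (koch_f2 z) < 1/2 \<and> Im (koch_f2 z) * sqrt 3 + Re (koch_f2 z) > 1/3"
  using KO_facts[of z] KO_D[of z] by (simp add: ReIm algebra_simps; elim conjE; simp add: field_simps; argo)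
lemma f3_sep: "z \<in> KO \<Longrightarrow> Re (koch_f3 z) > 1/2 \<and> Re (koch_f3 z) - Im (koch_f3 z) * sqrt 3 < 2/3"
  using KO_facts[of z] KO_D[of z] by (simp add: ReIm algebra_simps; elim conjE; simp add: field_simps; argo)
lemma f4_sep: "z \<in> KO \<Longrightarrow> Re (koch_f4 z) > 2/3 \<and> Re (koch_f4 z) - Im (koch_f4 z) * sqrt 3 > 2/3"
  using KO_facts[of z] KO_D[of z] by (simp add: ReIm algebra_simps; elim conjE; simp add: field_simps; argo)

lemma fk_sep: assumes "i < 4" "j < 4" "i \<noteq> j" "z \<in> KO" "w \<in> KO" shows "fk i z \<noteq> fk j w"
proof
  assume e: "fk i z = fk j w"
  note sz = f1_sep[OF assms(4)] f2_sep[OF assms(4)] f3_sep[OF assms(4)] f4_sep[OF assms(4)]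
  note sw = f1_sep[OF assms(5)] f2_sep[OF assms(5)] f3_sep[OF assms(5)] f4_sep[OF assms(5)]
  have "i = 0 \<or> i = 1 \<or> i = 2 \<or> i = 3" "j = 0 \<or> j = 1 \<or> j = 2 \<or> j = 3" using assms by auto
  then show False using e sz sw assms(3) by (auto simp: fk_def)
qed

lemma fk_KT: "i < 4 \<Longrightarrow> z \<in> KT \<Longrightarrow> fk i z \<in> KT"
  by (auto simp: fk_def f1_H f2_H f3_H f4_H)
lemma fk_KO: "i < 4 \<Longrightarrow> z \<in> KO \<Longrightarrow> fk i z \<in> KO"
  by (auto simp: fk_def f1_O f2_O f3_O f4_O)

lemma KO_sub_KT: "KO \<subseteq> KT" by (auto simp: KO_def KT_def)

lemma closed_KT: "closed KT"
  unfolding KT_def by (intro closed_Collect_conj closed_Collect_le continuous_intros)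
lemma open_KO: "open KO"
  unfolding KO_def by (intro open_Collect_conj open_Collect_less continuous_intros)

lemma KT_Im_bound: assumes "z \<in> KT" shows "Im z \<le> sqrt 3 / 6"
proof -
  have h: "Im z * sqrt 3 \<le> 1/2" using KT_D[OF assms] by linarith
  have "Im z * sqrt 3 * sqrt 3 \<le> 1/2 * sqrt 3" by (rule mult_right_mono[OF h]) simp
  then show ?thesis by (simp add: mult.assoc)
qed

lemma bounded_KT: "bounded KT"
proof -
  have "KT \<subseteq> cball 0 2"
  proof
    fix z assume z: "z \<in> KT"
    have "Im z \<le> 1" using KT_Im_bound[OF z] sq3_bounds by linarith
    then have "cmod z \<le> 2" using cmod_le[of z] KT_facts[OF z] by linarith
    then show "z \<in> cball 0 2" by simp
  qed
  then show ?thesis using bounded_cball bounded_subset by blast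
qed

lemma compact_KT: "compact KT" using closed_KT bounded_KT compact_eq_bounded_closed by blast

definition topv :: complex where "topv = Complex (1/2) (sqrt 3 / 6)"

lemma topv_KT: "topv \<in> KT" "0 \<in> KT" "1 \<in> KT"
  by (auto simp: KT_def topv_def)

lemma f1_1: "koch_f1 1 = 1/3" by (simp add: koch_f1_def)
lemma f2_0: "koch_f2 0 = 1/3" by (simp add: koch_f2_def)
lemma f2_1: "koch_f2 1 = topv" by (simp add: complex_eq_iff ReIm topv_def)
lemma f3_0: "koch_f3 0 = topv" by (simp add: complex_eq_iff ReIm topv_def)
lemma f3_1: "koch_f3 1 = 2/3" by (simp add: complex_eq_iff ReIm)
lemma f4_0: "koch_f4 0 = 2/3" by (simp add: koch_f4_def)
lemma f1_0: "koch_f1 0 = 0" by (simp add: koch_f1_def)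
lemma f4_1: "koch_f4 1 = 1" by (simp add: koch_f4_def)

definition s0 :: complex where "s0 = koch_f2 (koch_f1 1)"
lemma s0_eq: "s0 = Complex (7/18) (sqrt 3 / 18)"
  by (simp add: s0_def f1_1 complex_eq_iff ReIm)

lemma ball_s0: "ball s0 (1/20) \<subseteq> KO"
proof
  fix z assume "z \<in> ball s0 (1/20)"
  then have d: "cmod (z - s0) < 1/20" by (simp add: dist_norm norm_minus_commute)
  have "\<bar>Re (z - s0)\<bar> < 1/20" "\<bar>Im (z - s0)\<bar> < 1/20"
    using abs_Re_le_cmod[of "z - s0"] abs_Im_le_cmod[of "z - s0"] d by linarith+
  then have r: "\<bar>Re z - 7/18\<bar> < 1/20" and i: "\<bar>Im z - sqrt 3/18\<bar> < 1/20" by (simp_all add: s0_eq)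
  have i2: "Im z \<le> sqrt 3/18 + 1/20" using i by linarith
  have "Im z * sqrt 3 \<le> (sqrt 3/18 + 1/20) * sqrt 3" by (rule mult_right_mono[OF i2]) simp
  then have i3: "Im z * sqrt 3 \<le> 1/6 + sqrt 3 / 20" by (simp add: algebra_simps)
  have r': "7/18 - 1/20 < Re z" "Re z < 7/18+1/20" using r unfolding abs_less_iff by linarith+
  have i': "sqrt 3/18 - 1/20 < Im z" using i unfolding abs_less_iff by linarith
  show "z \<in> KO"
  proof (rule KO_I)
    show "0 < Im z" using i' sq3_bounds by linarith
    show "Im z * sqrt 3 < Re z" using i3 r' sq3_bounds by linarith
    show "Im z * sqrt 3 < 1 - Re z" using i3 r' sq3_bounds by linarith
  qed
qed



definition glue :: "(nat \<Rightarrow> real \<Rightarrow> complex) \<Rightarrow> real \<Rightarrow> complex" where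
  "glue g = (\<lambda>t. if t \<le> 3/4 then (if t \<le> 1/2 then (if t \<le> 1/4 then g 0 (4*t) else g 1 (4*t-1)) else g 2 (4*t-2)) else g 3 (4*t-3))"

lemma lip_piece:
  fixes c :: real
  assumes "L-lipschitz_on {0..1} h"
  shows "(4*L)-lipschitz_on {c/4..(c+1)/4} (\<lambda>t. h (4*t - c))"
proof (rule lipschitz_onI)
  show "0 \<le> 4*L" using lipschitz_on_nonneg[OF assms] by simp
  fix x y assume x: "x \<in> {c/4..(c+1)/4}" and y: "y \<in> {c/4..(c+1)/4}"
  have "4*x - c \<in> {0..1}" "4*y - c \<in> {0..1}" using x y by auto
  then have "dist (h (4*x - c)) (h (4*y-c)) \<le> L * dist (4*x-c) (4*y-c)"
    by (rule lipschitz_onD[OF assms])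
  also have "dist (4*x-c) (4*y-c) = 4 * dist x y" by (simp add: dist_real_def) (smt (verit))
  finally show "dist (h (4*x - c)) (h (4*y-c)) \<le> 4*L * dist x y" by simp
qed

lemma glue_lip:
  assumes L: "\<And>m. m < 4 \<Longrightarrow> L-lipschitz_on {0..1} (g m)"
    and b: "\<And>m. m < 3 \<Longrightarrow> g m 1 = g (Suc m) 0"
  shows "(4*L)-lipschitz_on {0..1} (glue g)"
proof -
  have p0: "(4*L)-lipschitz_on {0..1/4} (\<lambda>t. g 0 (4*t))"
    using lip_piece[OF L[of 0], of 0] by simp
  have p1: "(4*L)-lipschitz_on {1/4..1/2} (\<lambda>t. g 1 (4*t - 1))"
    using lip_piece[OF L[of 1], of 1] by simp
  have p2: "(4*L)-lipschitz_on {1/2..3/4} (\<lambda>t. g 2 (4*t - 2))"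
    using lip_piece[OF L[of 2], of 2] by simp
  have p3: "(4*L)-lipschitz_on {3/4..1} (\<lambda>t. g 3 (4*t - 3))"
    using lip_piece[OF L[of 3], of 3] by simp
  have q1: "(4*L)-lipschitz_on {0..1/2} (\<lambda>t. if t \<le> 1/4 then g 0 (4*t) else g 1 (4*t-1))"
    by (rule lipschitz_on_concat[OF p0 p1]) (use b[of 0] in simp)
  have q2: "(4*L)-lipschitz_on {0..3/4} (\<lambda>t. if t \<le> 1/2 then (if t \<le> 1/4 then g 0 (4*t) else g 1 (4*t-1)) else g 2 (4*t-2))"
    by (rule lipschitz_on_concat[OF q1 p2]) (use b[of 1] in \<open>simp add: numeral_2_eq_2\<close>)
  show ?thesis unfolding glue_def
    by (rule lipschitz_on_concat[OF q2 p3]) (use b[of 2] in simp)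
qed

lemma glue_0: "glue g 0 = g 0 0" by (simp add: glue_def)
lemma glue_1: "glue g 1 = g 3 1" by (simp add: glue_def)

lemma glue_image:
  assumes b: "\<And>m. m < 3 \<Longrightarrow> g m 1 = g (Suc m) 0"
  shows "glue g ` {0..1} = (\<Union>m<4. g m ` {0..1})"
proof
  show "glue g ` {0..1} \<subseteq> (\<Union>m<4. g m ` {0..1})"
  proof
    fix y assume "y \<in> glue g ` {0..1}"
    then obtain t where t: "t \<in> {0..1}" "y = glue g t" by auto
    consider "t \<le> 1/4" | "1/4 < t" "t \<le> 1/2" | "1/2 < t" "t \<le> 3/4" | "3/4 < t" by linarith
    then show "y \<in> (\<Union>m<4. g m ` {0..1})"
    proof cases
      case 1 then have "y = g 0 (4*t)" "4*t \<in> {0..1}" using t by (auto simp: glue_def)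
      then show ?thesis by (intro UN_I[of 0]) auto
    next
      case 2 then have "y = g 1 (4*t-1)" "4*t-1 \<in> {0..1}" using t by (auto simp: glue_def)
      then show ?thesis by (intro UN_I[of 1]) auto
    next
      case 3 then have "y = g 2 (4*t-2)" "4*t-2 \<in> {0..1}" using t by (auto simp: glue_def)
      then show ?thesis by (intro UN_I[of 2]) auto
    next
      case 4 then have "y = g 3 (4*t-3)" "4*t-3 \<in> {0..1}" using t by (auto simp: glue_def)
      then show ?thesis by (intro UN_I[of 3]) auto
    qed
  qed
next
  show "(\<Union>m<4. g m ` {0..1}) \<subseteq> glue g ` {0..1}"
  proof
    fix y assume "y \<in> (\<Union>m<4. g m ` {0..1})"
    then obtain m u where m: "m < 4" and u: "u \<in> {0..1}" and y: "y = g m u" by auto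
    have m4: "m = 0 \<or> m = 1 \<or> m = 2 \<or> m = 3" using m by auto
    show "y \<in> glue g ` {0..1}"
    proof (cases "u = 0 \<and> m > 0")
      case True
      then obtain m' where m': "m = Suc m'" "m' < 3" using m by (cases m) auto
      have "y = g m' 1" using True b[OF m'(2)] y m' by simp
      moreover have "glue g ((1 + real m')/4) = g m' 1"
        using m'(2) by (auto simp: glue_def less_Suc_eq numeral_eq_Suc)
      moreover have "(1 + real m')/4 \<in> {0..1}" using m'(2) by auto
      ultimately show ?thesis by (metis image_eqI)
    next
      case False
      then have "u > 0 \<or> m = 0" using u by auto
      then have "glue g ((u + real m)/4) = g m u"
        using m4 u by (auto simp: glue_def field_simps)
      moreover have "(u + real m)/4 \<in> {0..1}" using m u by auto
      ultimately show ?thesis using y by (metis image_eqI)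
    qed
  qed
qed



definition Pv :: "nat \<Rightarrow> complex" where "Pv m = [0, topv, 1, 0, 1] ! m"

fun gam :: "nat \<Rightarrow> real \<Rightarrow> complex" where
  "gam 0 = glue (\<lambda>m. linepath (Pv m) (Pv (Suc m)))"
| "gam (Suc j) = glue (\<lambda>m t. fk m (gam j t))"

lemma gam_ends: "gam j 0 = 0 \<and> gam j 1 = 1"
proof (induction j)
  case 0 then show ?case by (simp add: glue_0 glue_1 Pv_def linepath_def numeral_eq_Suc)
next
  case (Suc j) then show ?case by (simp add: glue_0 glue_1 fk_def f1_0 f4_1)
qed

lemma linepath_lip: "cmod (b - a) \<le> 1 \<Longrightarrow> 1-lipschitz_on {0..1} (linepath a b)"
proof (rule lipschitz_onI)
  fix x y :: real assume h: "cmod (b - a) \<le> 1"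
  have "linepath a b x - linepath a b y = (x - y) *\<^sub>R (b - a)"
    by (simp add: linepath_def algebra_simps)
  then have "dist (linepath a b x) (linepath a b y) = \<bar>x - y\<bar> * cmod (b - a)"
    by (simp add: dist_norm)
  also have "\<dots> \<le> \<bar>x - y\<bar> * 1" by (rule mult_left_mono[OF h]) simp
  finally show "dist (linepath a b x) (linepath a b y) \<le> 1 * dist x y" by (simp add: dist_real_def)
qed simp

lemma Pv_steps: "m < 4 \<Longrightarrow> cmod (Pv (Suc m) - Pv m) \<le> 1"
proof -
  assume "m < 4"
  then have m: "m = 0 \<or> m = 1 \<or> m = 2 \<or> m = 3" by auto
  have t1: "cmod topv \<le> 1" using cmod_le[of topv] sq3_bounds by (simp add: topv_def)
  have t2: "cmod (1 - topv) \<le> 1" using cmod_le[of "1 - topv"] sq3_bounds by (simp add: topv_def)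
  have t3: "cmod (topv - 1) \<le> 1" using t2 by (simp add: norm_minus_commute)
  show ?thesis using m t1 t2 t3 by (auto simp: Pv_def numeral_eq_Suc)
qed

lemma gam_lip: "(4 * (4/3)^j)-lipschitz_on {0..1} (gam j)"
proof (induction j)
  case 0
  have "(4*1)-lipschitz_on {0..1} (gam 0)"
    unfolding gam.simps
  proof (rule glue_lip)
    fix m :: nat assume "m < 4"
    then show "1-lipschitz_on {0..1} (linepath (Pv m) (Pv (Suc m)))" by (intro linepath_lip Pv_steps)
  next
    fix m :: nat assume "m < 3"
    show "linepath (Pv m) (Pv (Suc m)) 1 = linepath (Pv (Suc m)) (Pv (Suc (Suc m))) 0"
      by (simp add: linepath_def)
  qed
  then show ?case by simp
next
  case (Suc j)
  have l: "(4 * (4/3)^j / 3)-lipschitz_on {0..1} (\<lambda>t. fk m (gam j t))" if m: "m < 4" for m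
  proof (rule lipschitz_onI)
    fix x y :: real assume xy: "x \<in> {0..1}" "y \<in> {0..1}"
    have "dist (fk m (gam j x)) (fk m (gam j y)) = dist (gam j x) (gam j y) / 3" by (rule fk_dist[OF m])
    also have "\<dots> \<le> (4 * (4/3)^j * dist x y) / 3"
      using lipschitz_onD[OF Suc xy] by (simp add: divide_right_mono)
    finally show "dist (fk m (gam j x)) (fk m (gam j y)) \<le> 4 * (4/3)^j / 3 * dist x y" by simp
  qed simp
  have b: "fk m (gam j 1) = fk (Suc m) (gam j 0)" if "m < 3" for m
    using that gam_ends[of j] by (auto simp: fk_def less_Suc_eq numeral_eq_Suc f1_1 f2_0 f2_1 f3_0 f3_1 f4_0)
  have "(4 * (4 * (4/3)^j / 3))-lipschitz_on {0..1} (gam (Suc j))"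
    unfolding gam.simps by (rule glue_lip[where g="\<lambda>m t. fk m (gam j t)", OF l b])
  then show ?case by (simp add: field_simps)
qed

lemma gam_img_Suc: "gam (Suc j) ` {0..1} = (\<Union>m<4. fk m ` (gam j ` {0..1}))"
proof -
  have b: "fk m (gam j 1) = fk (Suc m) (gam j 0)" if "m < 3" for m
    using that gam_ends[of j] by (auto simp: fk_def less_Suc_eq numeral_eq_Suc f1_1 f2_0 f2_1 f3_0 f3_1 f4_0)
  show ?thesis unfolding gam.simps by (subst glue_image) (use b in \<open>auto simp: image_image\<close>)
qed

lemma gam_img_0: "closed_segment 0 1 \<union> closed_segment 0 topv \<union> closed_segment topv 1 \<subseteq> gam 0 ` {0..1}"
proof -
  have b: "linepath (Pv m) (Pv (Suc m)) 1 = linepath (Pv (Suc m)) (Pv (Suc (Suc m))) 0" if "m < 3" for m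
    by (simp add: linepath_def)
  have "gam 0 ` {0..1} = (\<Union>m<4. linepath (Pv m) (Pv (Suc m)) ` {0..1})"
    unfolding gam.simps by (rule glue_image) (use b in auto)
  also have "\<dots> = (\<Union>m<4. closed_segment (Pv m) (Pv (Suc m)))"
  proof -
    have "\<And>a b. linepath a b ` {0..1} = closed_segment a b"
      using path_image_linepath unfolding path_image_def by blast
    then show ?thesis by (intro SUP_cong) simp_all
  qed
  finally have e: "gam 0 ` {0..1} = (\<Union>m<4. closed_segment (Pv m) (Pv (Suc m)))" .
  have "closed_segment 0 topv \<subseteq> (\<Union>m<4. closed_segment (Pv m) (Pv (Suc m)))"
    by (rule UN_upper[of 0, THEN subset_trans[rotated]]) (auto simp: Pv_def)
  moreover have "closed_segment topv 1 \<subseteq> (\<Union>m<4. closed_segment (Pv m) (Pv (Suc m)))"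
    by (rule UN_upper[of 1, THEN subset_trans[rotated]]) (auto simp: Pv_def)
  moreover have "closed_segment 0 1 \<subseteq> (\<Union>m<4. closed_segment (Pv m) (Pv (Suc m)))"
    by (rule UN_upper[of 3, THEN subset_trans[rotated]]) (auto simp: Pv_def numeral_eq_Suc)
  ultimately show ?thesis using e by auto
qed

lemma KT_minus_KO: assumes "z \<in> KT" "z \<notin> KO"
  shows "z \<in> closed_segment 0 1 \<union> closed_segment 0 topv \<union> closed_segment topv 1"
proof -
  note f = KT_facts[OF assms(1)] KT_D[OF assms(1)]
  have "Im z = 0 \<or> Im z * sqrt 3 = Re z \<or> Im z * sqrt 3 = 1 - Re z"
    using assms f by (auto simp: KO_def KT_def mult.commute)
  then consider "Im z = 0" | "Im z * sqrt 3 = Re z" | "Im z * sqrt 3 = 1 - Re z" by blast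
  then show ?thesis
  proof cases
    case 1
    have "z = (1 - Re z) *\<^sub>R 0 + Re z *\<^sub>R 1" using 1 by (simp add: complex_eq_iff)
    then have "z \<in> closed_segment 0 1" using f unfolding in_segment by blast
    then show ?thesis by blast
  next
    case 2
    have "Im z * sqrt 3 * sqrt 3 = Re z * sqrt 3" using 2 by simp
    then have i: "Im z = Re z * sqrt 3 / 3" by (simp add: mult.assoc)
    have "z = (1 - 2 * Re z) *\<^sub>R 0 + (2 * Re z) *\<^sub>R topv" using i by (simp add: complex_eq_iff topv_def)
    moreover have "2 * Re z \<le> 1" using 2 f by linarith
    ultimately have "z \<in> closed_segment 0 topv" using f unfolding in_segment
      by (intro exI[of _ "2 * Re z"]) auto
    then show ?thesis by blast
  next
    case 3
    have "Im z * sqrt 3 * sqrt 3 = (1 - Re z) * sqrt 3" using 3 by simp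
    then have i: "Im z = (1 - Re z) * sqrt 3 / 3" by (simp add: mult.assoc)
    have "z = (2 - 2 * Re z) *\<^sub>R topv + (1 - (2 - 2 * Re z)) *\<^sub>R 1"
      using i by (simp add: complex_eq_iff topv_def algebra_simps)
    moreover have "1 \<le> 2 * Re z" using 3 f by linarith
    ultimately have "z \<in> closed_segment topv 1" using f unfolding in_segment
      by (intro exI[of _ "1 - (2 - 2 * Re z)"]) auto
    then show ?thesis by blast
  qed
qed

lemma base_claim:
  assumes y: "y \<in> KT" and d: "dist x y \<le> \<rho>" and r: "sqrt 3 / 6 \<le> \<rho>"
  shows "\<exists>p\<in>gam 0 ` {0..1}. dist x p \<le> \<rho>"
proof (cases "x \<in> KT")
  case True
  have "complex_of_real (Re x) = (1 - Re x) *\<^sub>R 0 + Re x *\<^sub>R 1" by (simp add: complex_eq_iff)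
  then have "complex_of_real (Re x) \<in> closed_segment 0 1" using KT_facts[OF True] unfolding in_segment by blast
  then have "complex_of_real (Re x) \<in> gam 0 ` {0..1}" using gam_img_0 by blast
  moreover have "dist x (complex_of_real (Re x)) = Im x"
    using KT_facts[OF True] by (simp add: dist_norm cmod_def)
  ultimately show ?thesis using KT_Im_bound[OF True] r by (intro bexI[of _ "complex_of_real (Re x)"]) auto
next
  case False
  have "closed_segment y x \<inter> frontier KT \<noteq> {}"
    by (rule connected_Int_frontier) (use y False in auto)
  then obtain p where p: "p \<in> closed_segment y x" "p \<in> frontier KT" by auto
  have "KO \<subseteq> interior KT" using open_KO KO_sub_KT interior_maximal by blast
  then have "p \<in> KT" "p \<notin> KO" using p(2) closed_KT unfolding frontier_def by auto
  then have "p \<in> gam 0 ` {0..1}" using KT_minus_KO gam_img_0 by blast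
  moreover have "dist x p \<le> \<rho>" using dist_in_closed_segment[OF p(1)] d by (simp add: dist_commute)
  ultimately show ?thesis by blast
qed



definition ifs_inv :: "complex set \<Rightarrow> bool" where
  "ifs_inv K \<longleftrightarrow> K = (\<Union>i<4. fk i ` K)"

lemma UN4: "(\<Union>i<(4::nat). A i) = A 0 \<union> A 1 \<union> A 2 \<union> (A 3 :: 'a set)"
proof -
  have "{..<4::nat} = {0,1,2,3}" by auto
  then show ?thesis by auto
qed

lemma ifs_inv_iff: "ifs_inv K \<longleftrightarrow> K = koch_f1 ` K \<union> koch_f2 ` K \<union> koch_f3 ` K \<union> koch_f4 ` K"
  unfolding ifs_inv_def UN4 by (simp add: fk_def)

lemma ifs_sub: "ifs_inv K \<Longrightarrow> i < 4 \<Longrightarrow> fk i ` K \<subseteq> K"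
  unfolding ifs_inv_def by blast

lemma ifs_elem: "ifs_inv K \<Longrightarrow> x \<in> K \<Longrightarrow> \<exists>i<4. \<exists>y\<in>K. x = fk i y"
  unfolding ifs_inv_def by blast

lemma ifs_contained:
  assumes K: "compact K" "ifs_inv K" and C: "closed C" "C \<noteq> {}" "\<And>i. i < 4 \<Longrightarrow> fk i ` C \<subseteq> C"
  shows "K \<subseteq> C"
proof
  fix x assume x: "x \<in> K"
  obtain c0 where c0: "c0 \<in> C" using C by auto
  obtain D where D: "\<forall>y\<in>K. dist c0 y \<le> D" using compact_imp_bounded[OF K(1)] bounded_any_center by metis
  have claim: "\<forall>y\<in>K. infdist y C \<le> D / 3^n" for n
  proof (induction n)
    case 0 then show ?case using D c0 infdist_le[OF c0] by (auto simp: dist_commute intro: order_trans)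
  next
    case (Suc n)
    show ?case
    proof
      fix y assume y: "y \<in> K"
      then obtain i y' where i: "i < 4" "y' \<in> K" "y = fk i y'" using ifs_elem[OF K(2)] by blast
      obtain c where c: "c \<in> C" "infdist y' C = dist y' c" using infdist_attains_inf[OF C(1) C(2)] by blast
      have "fk i c \<in> C" using C(3)[OF i(1)] c(1) by blast
      then have "infdist y C \<le> dist y (fk i c)" by (rule infdist_le)
      also have "\<dots> = dist y' c / 3" using fk_dist[OF i(1)] i(3) by simp
      also have "\<dots> \<le> (D / 3^n) / 3" using Suc.IH i(2) c(2) by (metis divide_right_mono zero_le_numeral)
      finally show "infdist y C \<le> D / 3 ^ Suc n" by simp
    qed
  qed
  have "infdist x C = 0"
  proof (rule ccontr)
    assume "infdist x C \<noteq> 0"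
    then have e: "infdist x C > 0" using infdist_nonneg[of x C] by linarith
    obtain n where n: "D / infdist x C < 3^n" using real_arch_pow[of 3 "D / infdist x C"] by auto
    then have "D < 3^n * infdist x C" using e by (simp add: field_simps)
    then have "D / 3^n < infdist x C" by (simp add: field_simps)
    then show False using claim[of n] x by fastforce
  qed
  then show "x \<in> C" using in_closure_iff_infdist_zero[OF C(2)] closure_closed[OF C(1)] by auto
qed

fun It :: "nat \<Rightarrow> complex set" where
  "It 0 = KT"
| "It (Suc n) = (\<Union>i<4. fk i ` It n)"

lemma It_compact: "compact (It n)"
  by (induction n) (auto intro!: compact_UN compact_continuous_image fk_cont simp: compact_KT)

lemma It_ne: "It n \<noteq> {}"
proof (induction n)
  case 0 then show ?case using topv_KT by auto
next
  case (Suc n)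
  then obtain x where "x \<in> It n" by auto
  then have "fk 0 x \<in> It (Suc n)" by auto
  then show ?case by auto
qed

lemma It_dec: "It (Suc n) \<subseteq> It n"
proof (induction n)
  case 0 then show ?case using fk_KT by auto
next
  case (Suc n)
  have "It (Suc (Suc n)) = (\<Union>i<4. fk i ` It (Suc n))" by simp
  also have "\<dots> \<subseteq> (\<Union>i<4. fk i ` It n)" using Suc.IH by blast
  also have "\<dots> = It (Suc n)" by simp
  finally show ?case .
qed

lemma It_mono: "m \<le> n \<Longrightarrow> It n \<subseteq> It m"
  by (rule lift_Suc_antimono_le[of It]) (use It_dec in auto)

definition S0 :: "complex set" where "S0 = (\<Inter>n. It n)"

lemma S0_compact: "compact S0"
  unfolding S0_def by (rule compact_Inter) (auto simp: It_compact)

lemma S0_ne: "S0 \<noteq> {}"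
  unfolding S0_def by (rule compact_nest) (auto simp: It_compact It_ne It_mono)

lemma S0_inv: "ifs_inv S0"
  unfolding ifs_inv_def
proof
  show "(\<Union>i<4. fk i ` S0) \<subseteq> S0"
  proof -
    have "fk i ` S0 \<subseteq> It n" if "i < 4" for i n
    proof -
      have "fk i ` S0 \<subseteq> fk i ` It n" unfolding S0_def by blast
      also have "\<dots> \<subseteq> It (Suc n)" using that by auto
      also have "\<dots> \<subseteq> It n" by (rule It_dec)
      finally show ?thesis .
    qed
    then show ?thesis unfolding S0_def by blast
  qed
next
  show "S0 \<subseteq> (\<Union>i<4. fk i ` S0)"
  proof
    fix x assume x: "x \<in> S0"
    show "x \<in> (\<Union>i<4. fk i ` S0)"
    proof (rule ccontr)
      assume nx: "x \<notin> (\<Union>i<4. fk i ` S0)"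
      have "\<exists>n. x \<notin> fk i ` It n" if i: "i < 4" for i
      proof (rule ccontr)
        assume "\<nexists>n. x \<notin> fk i ` It n"
        then have h: "\<forall>n. x \<in> fk i ` It n" by blast
        obtain y where y: "fk i y = x" using fk_surj[OF i] by blast
        have "y \<in> It n" for n
        proof -
          obtain y' where "y' \<in> It n" "x = fk i y'" using h by blast
          then show ?thesis using fk_inj[OF i, of y y'] y by simp
        qed
        then have "y \<in> S0" unfolding S0_def by blast
        then show False using nx y i by blast
      qed
      then obtain nn where nn: "\<And>i. i < 4 \<Longrightarrow> x \<notin> fk i ` It (nn i)" by metis
      define N where "N = nn 0 + nn 1 + nn 2 + nn 3"
      have "x \<notin> fk i ` It N" if i: "i < 4" for i
      proof -
        have "nn i \<le> N" using i unfolding N_def by (auto simp: less_Suc_eq numeral_eq_Suc)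
        then have "It N \<subseteq> It (nn i)" by (rule It_mono)
        then show ?thesis using nn[OF i] by blast
      qed
      moreover have "x \<in> It (Suc N)" using x unfolding S0_def by blast
      ultimately show False by auto
    qed
  qed
qed

lemma S0_sub_KT: "S0 \<subseteq> KT"
  unfolding S0_def using It.simps(1) by blast

lemma koch_eq: "koch = S0"
proof -
  have u: "K = S0" if K: "K \<noteq> {}" "compact K" "ifs_inv K" for K
  proof
    show "K \<subseteq> S0"
      by (rule ifs_contained[OF K(2,3)]) (use S0_compact S0_ne S0_inv ifs_sub in \<open>auto intro: compact_imp_closed\<close>)
    show "S0 \<subseteq> K"
      by (rule ifs_contained[OF S0_compact S0_inv]) (use K ifs_sub in \<open>auto intro: compact_imp_closed\<close>)
  qed
  show ?thesis unfolding koch_def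
  proof (rule the_equality)
    show "S0 \<noteq> {} \<and> compact S0 \<and> S0 = koch_f1 ` S0 \<union> koch_f2 ` S0 \<union> koch_f3 ` S0 \<union> koch_f4 ` S0"
      using S0_ne S0_compact S0_inv ifs_inv_iff by blast
  next
    fix K assume "K \<noteq> {} \<and> compact K \<and> K = koch_f1 ` K \<union> koch_f2 ` K \<union> koch_f3 ` K \<union> koch_f4 ` K"
    then show "K = S0" using u ifs_inv_iff by blast
  qed
qed

lemma koch_props: "compact koch" "koch \<noteq> {}" "ifs_inv koch" "koch \<subseteq> KT"
  using S0_compact S0_ne S0_inv S0_sub_KT by (simp_all add: koch_eq)

lemma fixpt_in:
  assumes i: "i < 4" and f: "fk i p = p"
  shows "p \<in> koch"
proof -
  obtain k where k: "k \<in> koch" "infdist p koch = dist p k"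
    using infdist_attains_inf[OF compact_imp_closed[OF koch_props(1)] koch_props(2)] by blast
  have "fk i k \<in> koch" using ifs_sub[OF koch_props(3) i] k(1) by blast
  then have "infdist p koch \<le> dist p (fk i k)" by (rule infdist_le)
  also have "\<dots> = dist p k / 3" using fk_dist[OF i, of p k] f by simp
  finally have "infdist p koch = 0" using k(2) infdist_nonneg[of p koch] by simp
  then show ?thesis using in_closure_iff_infdist_zero[OF koch_props(2)]
      closure_closed[OF compact_imp_closed[OF koch_props(1)]] by auto
qed

lemma zero_in: "0 \<in> koch" using fixpt_in[of 0 0] by (simp add: fk_def f1_0)
lemma one_in: "1 \<in> koch" using fixpt_in[of 3 1] by (simp add: fk_def f4_1)
lemma s0_in: "s0 \<in> koch"
proof -
  have "fk 0 1 \<in> koch" using ifs_sub[OF koch_props(3), of 0] one_in by auto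
  then have "fk 1 (fk 0 1) \<in> koch" using ifs_sub[OF koch_props(3), of 1] by auto
  then show ?thesis by (simp add: s0_def fk_def)
qed



lemma up_claim:
  "\<forall>\<rho> x y. y \<in> koch \<and> dist x y \<le> \<rho> \<and> sqrt 3 / 6 / 3^j \<le> \<rho> \<longrightarrow> (\<exists>p\<in>gam j ` {0..1}. dist x p \<le> \<rho>)"
proof (induction j)
  case 0 then show ?case using base_claim koch_props(4) by auto
next
  case (Suc j)
  show ?case
  proof (intro allI impI)
    fix \<rho> x y assume h: "y \<in> koch \<and> dist x y \<le> \<rho> \<and> sqrt 3 / 6 / 3 ^ Suc j \<le> \<rho>"
    obtain i y' where i: "i < 4" "y' \<in> koch" "y = fk i y'" using ifs_elem[OF koch_props(3)] h by blast
    obtain x' where x': "fk i x' = x" using fk_surj[OF i(1)] by blast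
    have d: "dist x' y' = 3 * dist x y" using fk_dist[OF i(1), of x' y'] x' i(3) by simp
    have "dist x' y' \<le> 3 * \<rho>" "sqrt 3 / 6 / 3^j \<le> 3 * \<rho>" using h d by (auto simp: field_simps)
    then obtain p' where p': "p' \<in> gam j ` {0..1}" "dist x' p' \<le> 3 * \<rho>" using Suc.IH i(2) by blast
    have "fk i p' \<in> gam (Suc j) ` {0..1}" unfolding gam_img_Suc using i(1) p'(1) by blast
    moreover have "dist x (fk i p') \<le> \<rho>" using fk_dist[OF i(1), of x' p'] x' p'(2) by simp
    ultimately show "\<exists>p\<in>gam (Suc j) ` {0..1}. dist x p \<le> \<rho>" by blast
  qed
qed

lemma ball_fk: "i < 4 \<Longrightarrow> ball (fk i q) (R/3) \<subseteq> fk i ` ball q R"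
proof
  fix z assume i: "i < 4" and z: "z \<in> ball (fk i q) (R/3)"
  obtain z' where z': "fk i z' = z" using fk_surj[OF i] by blast
  have "dist q z' = 3 * dist (fk i q) z" using fk_dist[OF i, of q z'] z' by simp
  then have "z' \<in> ball q R" using z by simp
  then show "z \<in> fk i ` ball q R" using z' by blast
qed

fun Qs :: "nat \<Rightarrow> complex set" where
  "Qs 0 = {s0}"
| "Qs (Suc n) = (\<Union>i<4. fk i ` Qs n)"

lemma Qs_props:
  "finite (Qs n) \<and> card (Qs n) = 4^n \<and> Qs n \<subseteq> koch \<and> (\<forall>q\<in>Qs n. ball q (1/20/3^n) \<subseteq> KO)
   \<and> (\<forall>q\<in>Qs n. \<forall>q'\<in>Qs n. q \<noteq> q' \<longrightarrow> ball q (1/20/3^n) \<inter> ball q' (1/20/3^n) = {})"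
proof (induction n)
  case 0 then show ?case using s0_in ball_s0 by simp
next
  case (Suc n)
  define R :: real where "R = 1/20/3^n"
  have R: "R > 0" "1/20/3^Suc n = R/3" unfolding R_def by simp_all
  have IH: "finite (Qs n)" "card (Qs n) = 4^n" "Qs n \<subseteq> koch" "\<And>q. q \<in> Qs n \<Longrightarrow> ball q R \<subseteq> KO"
    "\<And>q q'. q\<in>Qs n \<Longrightarrow> q'\<in>Qs n \<Longrightarrow> q \<noteq> q' \<Longrightarrow> ball q R \<inter> ball q' R = {}"
    using Suc.IH unfolding R_def by blast+
  have inQ: "q \<in> KO" if "q \<in> Qs n" for q using IH(4)[OF that] R(1) by auto
  have fin: "finite (Qs (Suc n))" using IH(1) by simp
  have disj: "fk i ` Qs n \<inter> fk j ` Qs n = {}" if "i < 4" "j < 4" "i \<noteq> j" for i j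
    using fk_sep[OF that] inQ by blast
  have "card (Qs (Suc n)) = (\<Sum>i<4. card (fk i ` Qs n))"
    unfolding Qs.simps by (rule card_UN_disjoint) (use IH(1) disj in auto)
  also have "\<dots> = (\<Sum>i<(4::nat). 4^n)"
  proof (rule sum.cong)
    fix i assume "i \<in> {..<(4::nat)}"
    then have "inj_on (fk i) (Qs n)" using fk_inj by (auto simp: inj_on_def)
    then show "card (fk i ` Qs n) = 4^n" using IH(2) by (simp add: card_image)
  qed simp
  finally have card: "card (Qs (Suc n)) = 4^Suc n" by simp
  have sub: "Qs (Suc n) \<subseteq> koch" using IH(3) ifs_sub[OF koch_props(3)] by auto
  have balls: "ball q (R/3) \<subseteq> KO" if qq: "q \<in> Qs (Suc n)" for q
  proof -
    obtain i a where ia: "i < 4" "a \<in> Qs n" "q = fk i a" using qq by auto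
    have "ball q (R/3) \<subseteq> fk i ` ball a R" using ball_fk[OF ia(1)] ia(3) by simp
    also have "\<dots> \<subseteq> fk i ` KO" using IH(4)[OF ia(2)] by blast
    also have "\<dots> \<subseteq> KO" using fk_KO[OF ia(1)] by blast
    finally show ?thesis .
  qed
  have dis: "ball q (R/3) \<inter> ball q' (R/3) = {}" if qq: "q \<in> Qs (Suc n)" "q' \<in> Qs (Suc n)" "q \<noteq> q'" for q q'
  proof -
    obtain i a where ia: "i < 4" "a \<in> Qs n" "q = fk i a" using qq(1) by auto
    obtain j b where jb: "j < 4" "b \<in> Qs n" "q' = fk j b" using qq(2) by auto
    have s1: "ball q (R/3) \<subseteq> fk i ` ball a R" using ball_fk[OF ia(1)] ia(3) by simp
    have s2: "ball q' (R/3) \<subseteq> fk j ` ball b R" using ball_fk[OF jb(1)] jb(3) by simp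
    show ?thesis
    proof (cases "i = j")
      case True
      then have "a \<noteq> b" using qq(3) ia jb by auto
      then have e: "ball a R \<inter> ball b R = {}" using IH(5) ia(2) jb(2) by blast
      show ?thesis
      proof (rule ccontr)
        assume "ball q (R/3) \<inter> ball q' (R/3) \<noteq> {}"
        then obtain z where "z \<in> ball q (R/3)" "z \<in> ball q' (R/3)" by auto
        then obtain u v where "u \<in> ball a R" "v \<in> ball b R" "fk i u = fk j v" using s1 s2 by force
        then show False using e True fk_inj[OF ia(1)] by blast
      qed
    next
      case False
      show ?thesis
      proof (rule ccontr)
        assume "ball q (R/3) \<inter> ball q' (R/3) \<noteq> {}"
        then obtain z where "z \<in> ball q (R/3)" "z \<in> ball q' (R/3)" by auto
        then obtain u v where "u \<in> ball a R" "v \<in> ball b R" "fk i u = fk j v" using s1 s2 by force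
        moreover have "u \<in> KO" "v \<in> KO" using IH(4) ia(2) jb(2) calculation by blast+
        ultimately show False using fk_sep[OF ia(1) jb(1) False] by blast
      qed
    qed
  qed
  show ?case using fin card sub balls dis unfolding R(2) by blast
qed

lemma disjoint_balls_dist:
  fixes q q' :: complex
  assumes "ball q R \<inter> ball q' R = {}" "R > 0"
  shows "dist q q' \<ge> 2 * R"
proof (rule ccontr)
  assume "\<not> dist q q' \<ge> 2 * R"
  then have d: "dist q q' < 2 * R" by simp
  define m where "m = (q + q') / 2"
  have "dist q m = dist q q' / 2" "dist q' m = dist q q' / 2"
  proof -
    have "q - m = (q - q') / 2" "q' - m = -((q - q') / 2)" unfolding m_def by (simp_all add: field_simps)
    then show "dist q m = dist q q' / 2" "dist q' m = dist q q' / 2"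
      unfolding dist_norm by (simp_all only: norm_minus_cancel norm_divide) simp_all
  qed
  then have "m \<in> ball q R" "m \<in> ball q' R" using d by auto
  then show False using assms(1) by blast
qed



lemma diam_lip_img:
  fixes \<gamma> :: "real \<Rightarrow> complex"
  assumes L: "L-lipschitz_on A \<gamma>" and B: "B \<subseteq> A" and h: "\<And>s t. s \<in> B \<Longrightarrow> t \<in> B \<Longrightarrow> dist s t \<le> h" "0 \<le> h"
  shows "diameter (\<gamma> ` B) \<le> L * h"
proof (rule diameter_le)
  show "\<gamma> ` B \<noteq> {} \<or> 0 \<le> L * h" using lipschitz_on_nonneg[OF L] h(2) by simp
  fix x y assume "x \<in> \<gamma> ` B" "y \<in> \<gamma> ` B"
  then obtain s t where st: "s \<in> B" "t \<in> B" "x = \<gamma> s" "y = \<gamma> t" by blast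
  have "norm (x - y) = dist (\<gamma> s) (\<gamma> t)" using st by (simp add: dist_norm)
  also have "\<dots> \<le> L * dist s t" using lipschitz_onD[OF L] st B by blast
  also have "\<dots> \<le> L * h" using h(1)[OF st(1,2)] lipschitz_on_nonneg[OF L] by (simp add: mult_left_mono)
  finally show "norm (x - y) \<le> L * h" .
qed

lemma haus_upper:
  fixes \<gamma> :: "real \<Rightarrow> complex"
  assumes L: "L-lipschitz_on {0..1} \<gamma>"
  shows "hausdorff1 (\<gamma> ` {0..1}) \<le> ennreal (2 * L)"
  unfolding hausdorff1_def
proof (rule SUP_least)
  fix \<delta> :: real assume "\<delta> \<in> {0<..}"
  then have d: "\<delta> > 0" by simp
  have L0: "0 \<le> L" using lipschitz_on_nonneg[OF L] .
  obtain N :: nat where N: "L / \<delta> < N" using reals_Archimedean2 by blast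
  have "0 \<le> L/\<delta>" using L0 d by simp
  then have "0 < real N" using N by linarith
  then have Npos: "N > 0" by simp
  have LN: "L / N \<le> \<delta>" using N d Npos by (simp add: field_simps)
  define U where "U i = (if i \<le> N then \<gamma> ` ({i/N..(i+1)/N} \<inter> {0..1}) else {})" for i :: nat
  have cont: "continuous_on {0..1} \<gamma>" using lipschitz_on_continuous_on[OF L] .
  have bU: "bounded (U i)" for i
  proof -
    have "compact (\<gamma> ` {0..1})" using compact_continuous_image[OF cont] by simp
    moreover have "U i \<subseteq> \<gamma> ` {0..1}" unfolding U_def by (simp add: image_mono)
    ultimately show ?thesis using compact_imp_bounded bounded_subset by blast
  qed
  have dU: "diameter (U i) \<le> L / N" for i
  proof (cases "i \<le> N")
    case True
    have "diameter (\<gamma> ` ({i/N..(i+1)/N} \<inter> {0..1})) \<le> L * (1/N)"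
    proof (rule diam_lip_img[OF L])
      fix s t assume "s \<in> {i/N..(i+1)/N} \<inter> {0..1}" "t \<in> {i/N..(i+1)/N} \<inter> {0..1}"
      then have "\<bar>s - t\<bar> \<le> (i+1)/N - i/N" by (auto simp: abs_le_iff)
      also have "\<dots> = 1/N" by (simp add: add_divide_distrib)
      finally show "dist s t \<le> 1/N" by (simp add: dist_real_def)
    qed auto
    then show ?thesis using True unfolding U_def by simp
  next
    case False then show ?thesis using L0 unfolding U_def by simp
  qed
  have cover: "\<gamma> ` {0..1} \<subseteq> (\<Union>i. U i)"
  proof
    fix x assume "x \<in> \<gamma> ` {0..1}"
    then obtain t where t: "t \<in> {0..1}" "x = \<gamma> t" by auto
    define i where "i = nat \<lfloor>t * N\<rfloor>"
    have tN: "0 \<le> t * N" using t by simp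
    have i1: "real i \<le> t * N" unfolding i_def using tN by linarith
    have i2: "t * N < real i + 1" unfolding i_def using tN by linarith
    have "t * N \<le> 1 * real N" using t by (intro mult_right_mono) auto
    then have "real i \<le> N" using i1 by linarith
    then have iN: "i \<le> N" by simp
    have "t \<in> {i/N..(i+1)/N}" using i1 i2 Npos by (auto simp: field_simps)
    then have "x \<in> U i" unfolding U_def if_P[OF iN] using t by blast
    then show "x \<in> (\<Union>i. U i)" by blast
  qed
  have mem: "U \<in> {U. \<gamma> ` {0..1} \<subseteq> (\<Union>i. U i) \<and> (\<forall>i. bounded (U i) \<and> diameter (U i) \<le> \<delta>)}"
  proof -
    have dd: "diameter (U i) \<le> \<delta>" for i using dU[of i] LN by linarith
    show ?thesis using cover bU dd by blast
  qed
  have "hausdorff1_pre \<delta> (\<gamma> ` {0..1}) \<le> (\<Sum>i. ennreal (diameter (U i)))"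
    unfolding hausdorff1_pre_def by (rule INF_lower[OF mem])
  also have "(\<Sum>i. ennreal (diameter (U i))) = (\<Sum>i\<le>N. ennreal (diameter (U i)))"
    by (rule suminf_finite) (auto simp: U_def)
  also have "\<dots> \<le> (\<Sum>i\<le>N. ennreal (L / N))"
    by (rule sum_mono) (use dU in \<open>simp add: ennreal_leI\<close>)
  also have "\<dots> = ennreal ((N+1) * (L / N))"
  proof -
    have "(\<Sum>i\<le>N. ennreal (L/N)) = ennreal (\<Sum>i\<le>N. L/N)" using L0 by (intro sum_ennreal) simp
    also have "(\<Sum>i\<le>N. L/N) = (N+1)*(L/N)" by simp
    finally show ?thesis .
  qed
  also have "\<dots> \<le> ennreal (2 * L)"
  proof (rule ennreal_leI)
    have "(N+1) * (L / N) = L + L / N" using Npos by (simp add: field_simps)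
    also have "L / N \<le> L" using Npos L0 by (simp add: divide_le_eq_1 field_simps mult_le_cancel_left1)
    finally show "(N+1) * (L / N) \<le> 2 * L" by simp
  qed
  finally show "hausdorff1_pre \<delta> (\<gamma> ` {0..1}) \<le> ennreal (2 * L)" .
qed



lemma arm_lower:
  fixes \<Gamma> :: "complex set" and U :: "nat \<Rightarrow> complex set"
  assumes conn: "connected \<Gamma>" and y: "y \<in> \<Gamma>" and p: "p \<in> \<Gamma>" "\<rho> \<le> dist y p" and r: "0 < \<rho>"
    and cover: "\<Gamma> \<inter> cball y \<rho> \<subseteq> (\<Union>i. U i)" and bnd: "\<And>i. bounded (U i)"
  shows "ennreal (\<rho>/2) \<le> (\<Sum>i. ennreal (diameter (U i)))"
proof -
  define \<phi> where "\<phi> x = dist y x" for x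
  have "connected (\<phi> ` \<Gamma>)" unfolding \<phi>_def by (rule connected_continuous_image[OF _ conn]) (intro continuous_intros)
  then have Icc: "{\<phi> y..\<phi> p} \<subseteq> \<phi> ` \<Gamma>" by (rule connected_contains_Icc) (use y p in auto)
  define c where "c i = (SOME u. u \<in> U i)" for i
  define I where "I i = (if U i = {} then {} else {\<phi> (c i) - diameter (U i) .. \<phi> (c i) + diameter (U i)})" for i
  have sub: "{0..\<rho>} \<subseteq> (\<Union>i. I i)"
  proof
    fix t assume t: "t \<in> {0..\<rho>}"
    then have "t \<in> {\<phi> y..\<phi> p}" using p unfolding \<phi>_def by auto
    then obtain x where x: "x \<in> \<Gamma>" "\<phi> x = t" using Icc by auto
    then have "x \<in> cball y \<rho>" using t unfolding \<phi>_def by auto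
    then obtain i where i: "x \<in> U i" using cover x by blast
    then have ne: "U i \<noteq> {}" by auto
    have ci: "c i \<in> U i" unfolding c_def using i by (rule someI)
    have "dist x (c i) \<le> diameter (U i)" by (rule diameter_bounded_bound[OF bnd i ci])
    moreover have "\<bar>\<phi> x - \<phi> (c i)\<bar> \<le> dist x (c i)" unfolding \<phi>_def
      by (smt (verit) dist_commute dist_triangle)
    ultimately have "t \<in> I i" unfolding I_def using ne x(2) by auto
    then show "t \<in> (\<Union>i. I i)" by blast
  qed
  have Isets: "I i \<in> sets lborel" for i unfolding I_def by auto
  have "ennreal \<rho> = emeasure lborel {0..\<rho>}" using r by simp
  also have "\<dots> \<le> emeasure lborel (\<Union>i. I i)"
    by (rule emeasure_mono[OF sub]) (use Isets in auto)
  also have "\<dots> \<le> (\<Sum>i. emeasure lborel (I i))"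
    by (rule emeasure_subadditive_countably) (use Isets in auto)
  also have "\<dots> \<le> (\<Sum>i. 2 * ennreal (diameter (U i)))"
  proof (rule suminf_le)
    fix i
    show "emeasure lborel (I i) \<le> 2 * ennreal (diameter (U i))"
    proof (cases "U i = {}")
      case True then show ?thesis unfolding I_def by simp
    next
      case False
      have d0: "0 \<le> diameter (U i)" using diameter_ge_0[OF bnd] .
      have "emeasure lborel (I i) = ennreal (2 * diameter (U i))"
        unfolding I_def using False d0 by (simp add: algebra_simps)
      also have "\<dots> = 2 * ennreal (diameter (U i))" using d0 by (simp add: ennreal_mult)
      finally show ?thesis by simp
    qed
  qed auto
  also have "\<dots> = 2 * (\<Sum>i. ennreal (diameter (U i)))" by simp
  finally have h: "ennreal \<rho> \<le> 2 * (\<Sum>i. ennreal (diameter (U i)))" .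
  have "ennreal \<rho> = 2 * ennreal (\<rho>/2)" using ennreal_mult[of 2 "\<rho>/2"] r by simp
  then have "2 * ennreal (\<rho>/2) \<le> 2 * (\<Sum>i. ennreal (diameter (U i)))" using h by simp
  then show ?thesis by (subst (asm) ennreal_mult_le_mult_iff) auto
qed

lemma sep_lower:
  fixes \<Gamma> :: "complex set"
  assumes conn: "connected \<Gamma>" and fin: "finite Y" and YG: "Y \<subseteq> \<Gamma>" and r: "0 < \<rho>" and d: "0 < \<delta>"
    and arms: "\<And>y. y \<in> Y \<Longrightarrow> \<exists>p\<in>\<Gamma>. \<rho> \<le> dist y p"
    and sep: "\<And>y y'. y \<in> Y \<Longrightarrow> y' \<in> Y \<Longrightarrow> y \<noteq> y' \<Longrightarrow> 2 * \<rho> + \<delta> < dist y y'"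
  shows "ennreal (card Y * (\<rho>/2)) \<le> hausdorff1 \<Gamma>"
proof -
  have "ennreal (card Y * (\<rho>/2)) \<le> hausdorff1_pre \<delta> \<Gamma>"
    unfolding hausdorff1_pre_def
  proof (rule INF_greatest)
    fix U :: "nat \<Rightarrow> complex set" assume "U \<in> {U. \<Gamma> \<subseteq> (\<Union>i. U i) \<and> (\<forall>i. bounded (U i) \<and> diameter (U i) \<le> \<delta>)}"
    then have cov: "\<Gamma> \<subseteq> (\<Union>i. U i)" and bU: "\<And>i. bounded (U i)" and dU: "\<And>i. diameter (U i) \<le> \<delta>" by auto
    define V :: "complex \<Rightarrow> nat \<Rightarrow> complex set" where "V y i = (if U i \<inter> cball y \<rho> = {} then {} else U i)" for y i
    have one: "ennreal (\<rho>/2) \<le> (\<Sum>i. ennreal (diameter (V y i)))" if yY: "y \<in> Y" for y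
    proof -
      obtain p where p: "p \<in> \<Gamma>" "\<rho> \<le> dist y p" using arms[OF yY] by blast
      show ?thesis
      proof (rule arm_lower[OF conn _ p r])
        show "y \<in> \<Gamma>" using yY YG by blast
        show "\<Gamma> \<inter> cball y \<rho> \<subseteq> (\<Union>i. V y i)"
        proof
          fix x assume x: "x \<in> \<Gamma> \<inter> cball y \<rho>"
          then obtain i where "x \<in> U i" using cov by blast
          then have "x \<in> V y i" using x unfolding V_def by auto
          then show "x \<in> (\<Union>i. V y i)" by blast
        qed
        show "bounded (V y i)" for i using bU unfolding V_def by auto
      qed
    qed
    have atmost: "(\<Sum>y\<in>Y. ennreal (diameter (V y i))) \<le> ennreal (diameter (U i))" for i
    proof (cases "\<exists>y0\<in>Y. U i \<inter> cball y0 \<rho> \<noteq> {}")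
      case False
      then have "\<forall>y\<in>Y. V y i = {}" unfolding V_def by auto
      then show ?thesis by simp
    next
      case True
      then obtain y0 where y0: "y0 \<in> Y" "U i \<inter> cball y0 \<rho> \<noteq> {}" by blast
      have others: "V y i = {}" if "y \<in> Y - {y0}" for y
      proof (rule ccontr)
        assume "V y i \<noteq> {}"
        then have "U i \<inter> cball y \<rho> \<noteq> {}" unfolding V_def by (auto split: if_splits)
        then obtain b where b: "b \<in> U i" "dist y b \<le> \<rho>" by auto
        obtain a where a: "a \<in> U i" "dist y0 a \<le> \<rho>" using y0(2) by auto
        have "dist a b \<le> diameter (U i)" by (rule diameter_bounded_bound[OF bU a(1) b(1)])
        then have "dist y0 y \<le> 2 * \<rho> + \<delta>" using a(2) b(2) dU[of i] dist_triangle[of y0 y a] dist_triangle[of a y b]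
          by (simp add: dist_commute)
        moreover have "2 * \<rho> + \<delta> < dist y0 y" using sep[OF y0(1)] that by auto
        ultimately show False by simp
      qed
      have "(\<Sum>y\<in>Y. ennreal (diameter (V y i))) = ennreal (diameter (V y0 i)) + (\<Sum>y\<in>Y - {y0}. ennreal (diameter (V y i)))"
        by (rule sum.remove[OF fin y0(1)])
      also have "(\<Sum>y\<in>Y - {y0}. ennreal (diameter (V y i))) = 0" using others by simp
      also have "V y0 i = U i" unfolding V_def using y0(2) by simp
      finally show ?thesis by simp
    qed
    have "ennreal (card Y * (\<rho>/2)) = (\<Sum>y\<in>Y. ennreal (\<rho>/2))" using r by (subst sum_ennreal) auto
    also have "\<dots> \<le> (\<Sum>y\<in>Y. \<Sum>i. ennreal (diameter (V y i)))" by (rule sum_mono) (rule one)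
    also have "\<dots> = (\<Sum>i. \<Sum>y\<in>Y. ennreal (diameter (V y i)))" by (rule suminf_sum[symmetric]) simp
    also have "\<dots> \<le> (\<Sum>i. ennreal (diameter (U i)))" by (rule suminf_le) (use atmost in auto)
    finally show "ennreal (card Y * (\<rho>/2)) \<le> (\<Sum>i. ennreal (diameter (U i)))" .
  qed
  also have "\<dots> \<le> hausdorff1 \<Gamma>" unfolding hausdorff1_def by (rule SUP_upper) (use d in auto)
  finally show ?thesis .
qed



lemma rect_props: assumes "rect_curve \<Gamma>" shows "compact \<Gamma>" "connected \<Gamma>" "\<Gamma> \<noteq> {}"
proof -
  obtain \<gamma> :: "real \<Rightarrow> complex" and L :: real where g: "L-lipschitz_on {0..1} \<gamma>" "\<Gamma> = \<gamma> ` {0..1}" using assms unfolding rect_curve_def by blast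
  have c: "continuous_on {0..1} \<gamma>" using lipschitz_on_continuous_on[OF g(1)] .
  show "compact \<Gamma>" unfolding g(2) by (rule compact_continuous_image[OF c]) simp
  show "connected \<Gamma>" unfolding g(2) by (rule connected_continuous_image[OF c]) simp
  show "\<Gamma> \<noteq> {}" unfolding g(2) by simp
qed

lemma near_pt: assumes "rect_curve \<Gamma>" "E \<subseteq> nbhd \<Gamma> \<rho>" "x \<in> E" shows "\<exists>q\<in>\<Gamma>. dist x q \<le> \<rho>"
proof -
  have "infdist x \<Gamma> \<le> \<rho>" using assms(2,3) unfolding nbhd_def by blast
  moreover obtain q where "q \<in> \<Gamma>" "infdist x \<Gamma> = dist x q"
    using infdist_attains_inf[OF compact_imp_closed[OF rect_props(1)[OF assms(1)]] rect_props(3)[OF assms(1)]] by blast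
  ultimately show ?thesis by auto
qed

lemma in_nbhd: "y \<in> koch \<Longrightarrow> dist x y \<le> \<rho> \<Longrightarrow> x \<in> nbhd koch \<rho>"
  unfolding nbhd_def using infdist_le[of y koch x] by auto

lemma two_pts:
  assumes G: "rect_curve \<Gamma>" "nbhd koch \<rho> \<subseteq> nbhd \<Gamma> \<rho>" and r: "0 \<le> \<rho>"
  shows "\<exists>q1\<in>\<Gamma>. \<exists>q2\<in>\<Gamma>. 1 \<le> dist q1 q2"
proof -
  have x1: "complex_of_real (-\<rho>) \<in> nbhd koch \<rho>" by (rule in_nbhd[OF zero_in]) (use r in \<open>simp add: dist_norm\<close>)
  have x2: "complex_of_real (1+\<rho>) \<in> nbhd koch \<rho>" by (rule in_nbhd[OF one_in]) (use r in \<open>simp add: dist_norm\<close>)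
  obtain q1 where q1: "q1 \<in> \<Gamma>" "dist (complex_of_real (-\<rho>)) q1 \<le> \<rho>" using near_pt[OF G x1] by blast
  obtain q2 where q2: "q2 \<in> \<Gamma>" "dist (complex_of_real (1+\<rho>)) q2 \<le> \<rho>" using near_pt[OF G x2] by blast
  have "dist (complex_of_real (-\<rho>)) (complex_of_real (1+\<rho>)) = dist (-\<rho>) (1+\<rho>)"
    by (rule dist_of_real)
  also have "\<dots> = 1 + 2*\<rho>" using r by (simp add: dist_real_def)
  finally have "dist (complex_of_real (-\<rho>)) (complex_of_real (1+\<rho>)) = 1 + 2*\<rho>" .
  then have "1 \<le> dist q1 q2"
    using q1(2) q2(2) dist_triangle[of "complex_of_real (-\<rho>)" "complex_of_real (1+\<rho>)" q1]
      dist_triangle[of q1 "complex_of_real (1+\<rho>)" q2] by (simp add: dist_commute)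
  then show ?thesis using q1 q2 by blast
qed

lemma arm_ex:
  assumes "\<exists>q1\<in>\<Gamma>. \<exists>q2\<in>\<Gamma>. 1 \<le> dist q1 q2"
  shows "\<exists>p\<in>\<Gamma>. 1/2 \<le> dist y p"
proof -
  obtain q1 q2 where q: "q1 \<in> \<Gamma>" "q2 \<in> \<Gamma>" "1 \<le> dist q1 q2" using assms by blast
  have "dist q1 q2 \<le> dist y q1 + dist y q2" using dist_triangle[of q1 q2 y] by (simp add: dist_commute)
  show ?thesis
  proof (cases "1/2 \<le> dist y q1")
    case True then show ?thesis using q(1) by blast
  next
    case False
    then have "1/2 \<le> dist y q2" using q(3) \<open>dist q1 q2 \<le> dist y q1 + dist y q2\<close> by linarith
    then show ?thesis using q(2) by blast
  qed
qed

lemma lower_const: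
  assumes G: "rect_curve \<Gamma>" "nbhd koch \<rho> \<subseteq> nbhd \<Gamma> \<rho>" and r: "0 \<le> \<rho>"
  shows "ennreal (1/4) \<le> hausdorff1 \<Gamma>"
proof -
  obtain q1 q2 where q: "q1 \<in> \<Gamma>" "q2 \<in> \<Gamma>" "1 \<le> dist q1 q2" using two_pts[OF G r] by blast
  have "ennreal (card {q1} * ((1/2)/2)) \<le> hausdorff1 \<Gamma>"
  proof (rule sep_lower[where \<delta>=1])
    show "connected \<Gamma>" using rect_props(2)[OF G(1)] .
    show "\<exists>p\<in>\<Gamma>. 1/2 \<le> dist y p" for y by (rule arm_ex) (use q in blast)
  qed (use q in auto)
  then show ?thesis by simp
qed



lemma upper_curve:
  assumes r: "sqrt 3 / 6 / 3^k \<le> r"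
  shows "rect_curve (gam k ` {0..1}) \<and> nbhd koch r \<subseteq> nbhd (gam k ` {0..1}) r
    \<and> hausdorff1 (gam k ` {0..1}) \<le> ennreal (8 * (4/3)^k)"
proof (intro conjI)
  show "rect_curve (gam k ` {0..1})" unfolding rect_curve_def using gam_lip[of k] by blast
  show "nbhd koch r \<subseteq> nbhd (gam k ` {0..1}) r"
  proof
    fix x assume x: "x \<in> nbhd koch r"
    obtain y where y: "y \<in> koch" "infdist x koch = dist x y"
      using infdist_attains_inf[OF compact_imp_closed[OF koch_props(1)] koch_props(2)] by blast
    have "dist x y \<le> r" using x y unfolding nbhd_def by simp
    then obtain p where p: "p \<in> gam k ` {0..1}" "dist x p \<le> r" using up_claim[of k] y(1) r by blast
    have "infdist x (gam k ` {0..1}) \<le> r" using infdist_le[OF p(1), of x] p(2) by linarith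
    then show "x \<in> nbhd (gam k ` {0..1}) r" unfolding nbhd_def by simp
  qed
  show "hausdorff1 (gam k ` {0..1}) \<le> ennreal (8 * (4/3)^k)"
    using haus_upper[OF gam_lip[of k]] by simp
qed

lemma Lam_upper: assumes "sqrt 3 / 6 / 3^k \<le> r" shows "Lam (nbhd koch r) r \<le> ennreal (8 * (4/3)^k)"
  unfolding Lam_def using upper_curve[OF assms] by (intro INF_lower2[of "gam k ` {0..1}"]) auto

lemma Lam_lower_const: assumes "0 \<le> \<rho>" shows "ennreal (1/4) \<le> Lam (nbhd koch \<rho>) \<rho>"
  unfolding Lam_def by (rule INF_greatest) (use lower_const assms in auto)

lemma main_lower:
  assumes r: "0 < r" "3^k * r < 1" and G: "rect_curve \<Gamma>" "nbhd koch r \<subseteq> nbhd \<Gamma> r"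
  shows "ennreal ((4/3)^(k-4) / 80) \<le> hausdorff1 \<Gamma>"
proof -
  define n where "n = k - 4"
  define e :: real where "e = 1/3^n"
  have e0: "0 < e" unfolding e_def by simp
  note Q = Qs_props[of n]
  have QR: "1/20/3^n = e/20" unfolding e_def by simp
  have near: "\<exists>p. p \<in> \<Gamma> \<and> dist q p \<le> r" if "q \<in> Qs n" for q
  proof -
    have "q \<in> koch" using Q that by blast
    then have "q \<in> nbhd koch r" by (rule in_nbhd) (use r in simp)
    then show ?thesis using near_pt[OF G] by blast
  qed
  obtain g where g: "\<And>q. q \<in> Qs n \<Longrightarrow> g q \<in> \<Gamma> \<and> dist q (g q) \<le> r" using near by metis
  have key: "e/10 \<le> dist q q' \<and> r < e/81" if qq: "q \<in> Qs n" "q' \<in> Qs n" "q \<noteq> q'" for q q'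
  proof -
    have k4: "4 \<le> k"
    proof (rule ccontr)
      assume "\<not> 4 \<le> k"
      then have "n = 0" unfolding n_def by simp
      then show False using qq by simp
    qed
    then have "k = n + 4" unfolding n_def by simp
    then have "(3::real)^k = 3^n * 81" by (simp add: power_add)
    then have "r < e/81" using r unfolding e_def by (simp add: field_simps)
    moreover have "ball q (e/20) \<inter> ball q' (e/20) = {}" using Q qq unfolding QR by blast
    then have "2 * (e/20) \<le> dist q q'" by (rule disjoint_balls_dist) (use e0 in simp)
    ultimately show ?thesis by simp
  qed
  define Y where "Y = g ` Qs n"
  have inj: "inj_on g (Qs n)"
  proof (rule inj_onI)
    fix q q' assume qq: "q \<in> Qs n" "q' \<in> Qs n" "g q = g q'"
    show "q = q'"
    proof (rule ccontr)
      assume ne: "q \<noteq> q'"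
      have "dist q q' \<le> dist q (g q) + dist q' (g q')"
        using dist_triangle[of q q' "g q"] qq(3) by (simp add: dist_commute)
      then show False using key[OF qq(1,2) ne] g[OF qq(1)] g[OF qq(2)] e0 by linarith
    qed
  qed
  have cardY: "card Y = 4^n" unfolding Y_def using card_image[OF inj] Q by simp
  have "ennreal (card Y * ((e/40)/2)) \<le> hausdorff1 \<Gamma>"
  proof (rule sep_lower[where \<delta> = "e/100"])
    show "connected \<Gamma>" using rect_props(2)[OF G(1)] .
    show "finite Y" unfolding Y_def using Q by simp
    show "Y \<subseteq> \<Gamma>" unfolding Y_def using g by auto
    show "0 < e/40" "0 < e/100" using e0 by simp_all
    have tp: "\<exists>q1\<in>\<Gamma>. \<exists>q2\<in>\<Gamma>. 1 \<le> dist q1 q2" using two_pts[OF G] r by simp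
    have "e \<le> 1" unfolding e_def by simp
    then show "\<exists>p\<in>\<Gamma>. e/40 \<le> dist y p" for y using arm_ex[OF tp, of y] by force
    fix y y' assume yy: "y \<in> Y" "y' \<in> Y" "y \<noteq> y'"
    then obtain q q' where qq: "q \<in> Qs n" "q' \<in> Qs n" "y = g q" "y' = g q'" unfolding Y_def by blast
    then have ne: "q \<noteq> q'" using yy by auto
    have "dist q q' \<le> dist q y + dist y y' + dist q' y'"
      using dist_triangle[of q q' y] dist_triangle[of y q' y'] by (simp add: dist_commute)
    then show "2 * (e/40) + e/100 < dist y y'" using key[OF qq(1,2) ne] g[OF qq(1)] g[OF qq(2)] qq e0 by auto
  qed
  moreover have "card Y * ((e/40)/2) = (4/3)^n / 80" unfolding cardY e_def by (simp add: power_divide)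
  ultimately show ?thesis unfolding n_def by simp
qed

lemma Lam_lower_main:
  assumes r: "0 < r" "3^k * r < 1"
  shows "ennreal ((4/3)^k * (81/20480)) \<le> Lam (nbhd koch r) r"
proof -
  have "(4/3::real)^k \<le> (4/3)^((k-4)+4)" by (rule power_increasing) auto
  also have "\<dots> = (4/3)^(k-4) * (256/81)" by (simp add: power_add power_divide)
  finally have "(4/3)^k * (81/20480) \<le> (4/3::real)^(k-4) / 80" by simp
  then have "ennreal ((4/3)^k * (81/20480)) \<le> ennreal ((4/3)^(k-4) / 80)" by (rule ennreal_leI)
  also have "\<dots> \<le> Lam (nbhd koch r) r"
    unfolding Lam_def by (rule INF_greatest) (use main_lower[OF r] in auto)
  finally show ?thesis .
qed



theorem lemma3p5:
  shows "\<exists>C::real. C > 1 \<and> (\<forall>r::real. 0 < r \<and> r < 1/3 \<longrightarrow>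
           (\<forall>k::nat. 0 < k \<and> 1/3 \<le> 3^k * r \<and> 3^k * r < 1 \<longrightarrow>
              ennreal (1/C) * Lam (nbhd koch (3^k * r)) (3^k * r) * ennreal ((4/3)^k)
                \<le> Lam (nbhd koch r) r
            \<and> Lam (nbhd koch r) r
                \<le> ennreal C * Lam (nbhd koch (3^k * r)) (3^k * r) * ennreal ((4/3)^k)))"
proof (intro exI[of _ 3000] conjI allI impI)
  fix r :: real and k :: nat
  assume r: "0 < r \<and> r < 1/3" and k: "0 < k \<and> 1/3 \<le> 3^k * r \<and> 3^k * r < 1"
  define r' where "r' = 3^k * r"
  define A where "A = Lam (nbhd koch r') r'"
  define B where "B = Lam (nbhd koch r) r"
  have s6: "sqrt 3 / 6 \<le> 1/3" using sq3_bounds by simp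
  have A_up: "A \<le> ennreal 8"
  proof -
    have "sqrt 3 / 6 / 3^0 \<le> r'" using s6 k unfolding r'_def by simp
    from Lam_upper[OF this] show ?thesis unfolding A_def by simp
  qed
  have A_lo: "ennreal (1/4) \<le> A" unfolding A_def r'_def using Lam_lower_const r by simp
  have B_up: "B \<le> ennreal (8 * (4/3)^k)"
  proof -
    have "sqrt 3 / 6 / 3^k \<le> (1/3) / 3^k" using divide_right_mono[OF s6, of "3^k"] by simp
    also have "\<dots> \<le> r" using k by (simp add: field_simps)
    finally show ?thesis unfolding B_def by (rule Lam_upper)
  qed
  have B_lo: "ennreal ((4/3)^k * (81/20480)) \<le> B" unfolding B_def using Lam_lower_main r k by simp
  show "ennreal (1/3000) * Lam (nbhd koch (3^k * r)) (3^k * r) * ennreal ((4/3)^k) \<le> Lam (nbhd koch r) r"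
  proof -
    have "ennreal (1/3000) * A * ennreal ((4/3)^k) \<le> ennreal (1/3000) * ennreal 8 * ennreal ((4/3)^k)"
      by (intro mult_right_mono mult_left_mono A_up) auto
    also have "\<dots> = ennreal (1/3000 * 8 * (4/3)^k)" using ennreal_mult[of "1/3000" 8] ennreal_mult[of "1/3000*8" "(4/3)^k"] by simp
    also have "\<dots> \<le> ennreal ((4/3)^k * (81/20480))" by (rule ennreal_leI) simp
    also have "\<dots> \<le> B" by (rule B_lo)
    finally show ?thesis unfolding A_def B_def r'_def .
  qed
  show "Lam (nbhd koch r) r \<le> ennreal 3000 * Lam (nbhd koch (3^k * r)) (3^k * r) * ennreal ((4/3)^k)"
  proof -
    have "B \<le> ennreal (8 * (4/3)^k)" by (rule B_up)
    also have "\<dots> \<le> ennreal (3000 * (1/4) * (4/3)^k)" by (rule ennreal_leI) simp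
    also have "\<dots> = ennreal 3000 * ennreal (1/4) * ennreal ((4/3)^k)" using ennreal_mult[of 3000 "1/4"] ennreal_mult[of "3000*(1/4)" "(4/3)^k"] by simp
    also have "\<dots> \<le> ennreal 3000 * A * ennreal ((4/3)^k)"
      by (intro mult_right_mono mult_left_mono A_lo) auto
    finally show ?thesis unfolding A_def B_def r'_def .
  qed
qed simp


end
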